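(* Let $G$ be a graph of order $n$ having $q\ge 1$ vertices $v_1,\dots,v_q$, each of degree larger than two, such that the distance between any two of them is at least three, and such that the set of vertices not adjacent to (nor equal to) any $v_i$, $i\in\{1,\dots,q\}$, i.e. $V(G)\setminus\bigcup_{i=1}^q N_G[v_i]$, is an independent set. Then $$\gamma_{qtR}(G)\le n+3q-\sum_{i=1}^q (d_G(v_i)+1).$$
   Context: All graphs are finite, simple and undirected; $N_G[v]$ is the closed neighborhood and $d_G(v)$ the degree. For $f:V(G)\to\{0,1,2\}$ write $V_i=\{v:f(v)=i\}$; weight $\omega(f)=|V_1|+2|V_2|$. A quasi-total Roman dominating function (QTRDF) is an $f$ such that every vertex labeled $0$ is adjacent to a vertex labeled $2$, and every vertex isolated in the subgraph induced by $V_1\cup V_2$ has label $1$; $\gamma_{qtR}(G)$ is the minimum weight of a QTRDF. *)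

theory Defs
  imports Main
begin

definition simple_graph :: "'a set \<Rightarrow> ('a \<Rightarrow> 'a \<Rightarrow> bool) \<Rightarrow> bool" where
  "simple_graph V E \<longleftrightarrow> finite V \<and> (\<forall>u w. E u w \<longrightarrow> u \<in> V \<and> w \<in> V)
     \<and> (\<forall>u w. E u w \<longrightarrow> E w u) \<and> (\<forall>u. \<not> E u u)"

definition nbhd :: "'a set \<Rightarrow> ('a \<Rightarrow> 'a \<Rightarrow> bool) \<Rightarrow> 'a \<Rightarrow> 'a set" where
  "nbhd V E v = {u \<in> V. E v u}"

definition closed_nbhd :: "'a set \<Rightarrow> ('a \<Rightarrow> 'a \<Rightarrow> bool) \<Rightarrow> 'a \<Rightarrow> 'a set" where
  "closed_nbhd V E v = insert v (nbhd V E v)"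

definition degree :: "'a set \<Rightarrow> ('a \<Rightarrow> 'a \<Rightarrow> bool) \<Rightarrow> 'a \<Rightarrow> nat" where
  "degree V E v = card (nbhd V E v)"

text \<open>A walk given as a vertex list; its length is the number of edges.\<close>
definition is_walk :: "'a set \<Rightarrow> ('a \<Rightarrow> 'a \<Rightarrow> bool) \<Rightarrow> 'a list \<Rightarrow> bool" where
  "is_walk V E xs \<longleftrightarrow> xs \<noteq> [] \<and> set xs \<subseteq> V \<and> (\<forall>i. Suc i < length xs \<longrightarrow> E (xs ! i) (xs ! Suc i))"

definition dist_ge :: "'a set \<Rightarrow> ('a \<Rightarrow> 'a \<Rightarrow> bool) \<Rightarrow> 'a \<Rightarrow> 'a \<Rightarrow> nat \<Rightarrow> bool" where
  "dist_ge V E u w k \<longleftrightarrow> (\<forall>xs. is_walk V E xs \<and> hd xs = u \<and> last xs = w \<longrightarrow> length xs - 1 \<ge> k)"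

definition independent_set :: "('a \<Rightarrow> 'a \<Rightarrow> bool) \<Rightarrow> 'a set \<Rightarrow> bool" where
  "independent_set E S \<longleftrightarrow> (\<forall>u\<in>S. \<forall>w\<in>S. \<not> E u w)"

definition weight :: "'a set \<Rightarrow> ('a \<Rightarrow> nat) \<Rightarrow> nat" where
  "weight V f = (\<Sum>v\<in>V. f v)"

definition is_QTRDF :: "'a set \<Rightarrow> ('a \<Rightarrow> 'a \<Rightarrow> bool) \<Rightarrow> ('a \<Rightarrow> nat) \<Rightarrow> bool" where
  "is_QTRDF V E f \<longleftrightarrow> (\<forall>v\<in>V. f v \<le> 2)
     \<and> (\<forall>v\<in>V. f v = 0 \<longrightarrow> (\<exists>u\<in>V. E v u \<and> f u = 2))
     \<and> (\<forall>v\<in>V. f v \<ge> 1 \<and> (\<forall>u\<in>V. E v u \<longrightarrow> f u = 0) \<longrightarrow> f v = 1)"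

definition gamma_qtR :: "'a set \<Rightarrow> ('a \<Rightarrow> 'a \<Rightarrow> bool) \<Rightarrow> nat" where
  "gamma_qtR V E = (LEAST w. \<exists>f. is_QTRDF V E f \<and> weight V f = w)"

end

theory Submission
  imports Defs
begin

lemma walk1: "a \<in> V \<Longrightarrow> is_walk V E [a]"
  by (simp add: is_walk_def)

lemma walk2: "a \<in> V \<Longrightarrow> b \<in> V \<Longrightarrow> E a b \<Longrightarrow> is_walk V E [a,b]"
  by (auto simp: is_walk_def less_Suc_eq)

lemma walk3: "a \<in> V \<Longrightarrow> b \<in> V \<Longrightarrow> c \<in> V \<Longrightarrow> E a b \<Longrightarrow> E b c \<Longrightarrow> is_walk V E [a,b,c]"
  by (auto simp: is_walk_def less_Suc_eq nth_Cons split: nat.split)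

lemma dist3_disj:
  assumes g: "simple_graph V E" and a: "a \<in> V" and b: "b \<in> V" and d: "dist_ge V E a b 3"
  shows "closed_nbhd V E a \<inter> closed_nbhd V E b = {}"
proof (rule ccontr)
  assume "closed_nbhd V E a \<inter> closed_nbhd V E b \<noteq> {}"
  then obtain x where x: "x \<in> closed_nbhd V E a" "x \<in> closed_nbhd V E b" by blast
  have sym: "\<And>u w. E u w \<Longrightarrow> E w u" using g by (simp add: simple_graph_def)
  have ne: "a \<noteq> b"
  proof
    assume "a = b" then show False using d walk1[OF a, of E] unfolding dist_ge_def by fastforce
  qed
  have nab: "\<not> E a b"
  proof
    assume "E a b" then show False using d walk2[OF a b, of E] unfolding dist_ge_def by fastforce
  qed
  show False
  proof (cases "x = a")
    case True
    then show ?thesis using x(2) ne nab sym by (auto simp: closed_nbhd_def nbhd_def)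
  next
    case xa: False
    then have ax: "E a x" "x \<in> V" using x(1) by (auto simp: closed_nbhd_def nbhd_def)
    show ?thesis
    proof (cases "x = b")
      case True then show ?thesis using ax nab by simp
    next
      case False
      then have "E b x" using x(2) by (auto simp: closed_nbhd_def nbhd_def)
      then have "is_walk V E [a,x,b]" using walk3[of a V x b E] a ax b sym by blast
      then show False using d unfolding dist_ge_def by fastforce
    qed
  qed
qed

theorem mainTheorem5:
  fixes V :: "'a set" and E :: "'a \<Rightarrow> 'a \<Rightarrow> bool" and q :: nat and v :: "nat \<Rightarrow> 'a"
  assumes "simple_graph V E"
    and "q \<ge> 1"
    and "\<forall>i\<in>{1..q}. v i \<in> V \<and> degree V E (v i) > 2"
    and "\<forall>i\<in>{1..q}. \<forall>j\<in>{1..q}. i \<noteq> j \<longrightarrow> dist_ge V E (v i) (v j) 3"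
    and "independent_set E (V - (\<Union>i\<in>{1..q}. closed_nbhd V E (v i)))"
  shows "int (gamma_qtR V E) \<le> int (card V) + 3 * int q - (\<Sum>i=1..q. int (degree V E (v i)) + 1)"
proof -
  note g = assms(1)
  have finV: "finite V" using g by (simp add: simple_graph_def)
  have sym: "\<And>u w. E u w \<Longrightarrow> E w u" using g by (simp add: simple_graph_def)
  have irr: "\<And>u. \<not> E u u" using g by (simp add: simple_graph_def)
  have inV: "\<And>u w. E u w \<Longrightarrow> u \<in> V \<and> w \<in> V" using g by (simp add: simple_graph_def)
  define C where "C i = closed_nbhd V E (v i)" for i
  have disj: "\<And>i j. i \<in> {1..q} \<Longrightarrow> j \<in> {1..q} \<Longrightarrow> i \<noteq> j \<Longrightarrow> C i \<inter> C j = {}"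
    using assms(3,4) dist3_disj[OF g] unfolding C_def by blast
  have ex: "\<exists>u. u \<in> nbhd V E (v i)" if "i \<in> {1..q}" for i
  proof -
    have "card (nbhd V E (v i)) > 0" using assms(3) that unfolding degree_def by fastforce
    then show ?thesis by (metis card.empty ex_in_conv less_irrefl)
  qed
  define u where "u i = (SOME x. x \<in> nbhd V E (v i))" for i
  have u: "u i \<in> nbhd V E (v i)" if "i \<in> {1..q}" for i
    using someI_ex[OF ex[OF that]] unfolding u_def .
  define N where "N = (\<Union>i\<in>{1..q}. C i)"
  define f where "f x = (if x \<in> v ` {1..q} then 2 else if x \<in> u ` {1..q} then 1
        else if x \<in> N then 0 else (1::nat))" for x
  have vC: "v i \<in> C i" for i by (simp add: C_def closed_nbhd_def)
  have uC: "i \<in> {1..q} \<Longrightarrow> u i \<in> C i" for i using u by (simp add: C_def closed_nbhd_def)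
  have uv: "i \<in> {1..q} \<Longrightarrow> u i \<noteq> v i \<and> E (v i) (u i) \<and> u i \<in> V" for i using u irr
    by (metis (no_types, lifting) mem_Collect_eq nbhd_def)
  have CV: "i \<in> {1..q} \<Longrightarrow> C i \<subseteq> V" for i using assms(3) by (auto simp: C_def closed_nbhd_def nbhd_def)
  have finC: "finite (C i)" if "i \<in> {1..q}" for i using CV[OF that] finV finite_subset by blast
  have NV: "N \<subseteq> V" using CV N_def by blast
  have fC: "f x = (if x = v i then 2 else if x = u i then 1 else 0)" if i: "i \<in> {1..q}" and x: "x \<in> C i" for i x
  proof -
    have vj: "x = v j \<longleftrightarrow> j = i \<and> x = v i" if "j \<in> {1..q}" for j
      using disj[OF i that] vC x by blast
    have uj: "x = u j \<longleftrightarrow> j = i \<and> x = u i" if "j \<in> {1..q}" for j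
      using disj[OF i that] uC[OF that] x by blast
    have "x \<in> N" using x i N_def by blast
    moreover have "x \<in> v ` {1..q} \<longleftrightarrow> x = v i" using vj i by blast
    moreover have "x \<in> u ` {1..q} \<longleftrightarrow> x = u i" using uj i by blast
    ultimately show ?thesis unfolding f_def using uv[OF i] by simp
  qed
  have sumC: "sum f (C i) = 3" if i: "i \<in> {1..q}" for i
  proof -
    have sub: "{v i, u i} \<subseteq> C i" using vC uC[OF i] by blast
    have "sum f (C i) = sum f (C i - {v i, u i}) + sum f {v i, u i}"
      using sum.subset_diff[OF sub finC[OF i]] .
    moreover have "sum f (C i - {v i, u i}) = 0" using fC[OF i] by (auto intro!: sum.neutral)
    moreover have "sum f {v i, u i} = f (v i) + f (u i)" using uv[OF i] by (subst sum.insert) auto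
    ultimately show ?thesis using fC[OF i, of "v i"] fC[OF i, of "u i"] vC uC[OF i] uv[OF i] by simp
  qed
  have sumN: "sum f N = 3 * q"
    unfolding N_def using sum.UNION_disjoint[of "{1..q}" C f] finC sumC disj by simp
  have cardN: "card N = (\<Sum>i=1..q. degree V E (v i) + 1)"
  proof -
    have "card N = (\<Sum>i=1..q. card (C i))"
      unfolding N_def using card_UN_disjoint[of "{1..q}" C] finC disj by simp
    also have "\<dots> = (\<Sum>i=1..q. degree V E (v i) + 1)"
    proof (rule sum.cong[OF refl])
      fix i assume "i \<in> {1..q}"
      have "v i \<notin> nbhd V E (v i)" using irr by (simp add: nbhd_def)
      moreover have "finite (nbhd V E (v i))" using finV by (simp add: nbhd_def)
      ultimately show "card (C i) = degree V E (v i) + 1"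
        by (simp add: C_def closed_nbhd_def degree_def)
    qed
    finally show ?thesis .
  qed
  have sumR: "sum f (V - N) = card (V - N)"
  proof -
    have "sum f (V - N) = sum (\<lambda>_. 1) (V - N)"
    proof (rule sum.cong[OF refl])
      fix x assume "x \<in> V - N"
      moreover have "v ` {1..q} \<subseteq> N" "u ` {1..q} \<subseteq> N" using vC uC N_def by blast+
      ultimately show "f x = 1" unfolding f_def by auto
    qed
    then show ?thesis by simp
  qed
  have w: "weight V f = card V - card N + 3 * q"
  proof -
    have "weight V f = sum f (V - N) + sum f N" unfolding weight_def
      using sum.subset_diff[OF NV finV] by simp
    moreover have "card (V - N) = card V - card N" using card_Diff_subset[of N V] NV finV finite_subset by blast
    ultimately show ?thesis using sumR sumN by simp
  qed
  have cle: "card N \<le> card V" using NV finV card_mono by blast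
  have Q: "is_QTRDF V E f"
    unfolding is_QTRDF_def
  proof (intro conjI ballI impI)
    fix x assume "x \<in> V" show "f x \<le> 2" by (simp add: f_def)
  next
    fix x assume x: "x \<in> V" and f0: "f x = 0"
    then have "x \<in> N" by (auto simp: f_def split: if_splits)
    then obtain i where i: "i \<in> {1..q}" and xc: "x \<in> C i" using N_def by blast
    then have "x \<noteq> v i" using fC f0 by fastforce
    then have "E (v i) x" using xc by (simp add: C_def closed_nbhd_def nbhd_def)
    moreover have "v i \<in> V" "f (v i) = 2" using assms(3) i fC[OF i vC] by auto
    ultimately show "\<exists>y\<in>V. E x y \<and> f y = 2" using sym by blast
  next
    fix x assume x: "x \<in> V" and h: "1 \<le> f x \<and> (\<forall>y\<in>V. E x y \<longrightarrow> f y = 0)"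
    show "f x = 1"
    proof (rule ccontr)
      assume "f x \<noteq> 1"
      then have "f x = 2" using h by (simp add: f_def split: if_splits)
      then obtain i where i: "i \<in> {1..q}" and xv: "x = v i" by (auto simp: f_def split: if_splits)
      have "f (u i) = 1" using fC[OF i uC[OF i]] uv[OF i] by simp
      then show False using h uv[OF i] xv by auto
    qed
  qed
  have "gamma_qtR V E \<le> weight V f" unfolding gamma_qtR_def
    by (rule Least_le) (use Q in blast)
  then have "int (gamma_qtR V E) \<le> int (card V) - int (card N) + 3 * int q"
    using w cle by simp
  moreover have "int (card N) = (\<Sum>i=1..q. int (degree V E (v i)) + 1)"
    using cardN by (simp add: add.commute)
  ultimately show ?thesis by simp
qed

end
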